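(* Every rotation $R$ of $\mathbb{R}^4$ can be written as $R=R_0\circ R^{xw}_\psi\circ R^{zw}_\phi\circ R^{xy}_\theta$ for some angles $\theta,\phi,\psi$ and some rotation $R_0$ of $\mathbb{R}^4$ that is the trivial extension of a rotation of $\mathbb{R}^3=\{(x,y,z,0)\}$ (i.e. $R_0$ fixes $(0,0,0,1)$ and maps $\{(x,y,z,0)\}$ to itself).
   Context: A rotation of $\mathbb{R}^n$ is a linear map whose matrix is orthogonal with determinant $1$. Denote coordinates of $\mathbb{R}^4$ by $(x,y,z,w)$ (indices $1,2,3,4$). For coordinate indices $k<j$, the elementary rotation $R^{kj}_\alpha$ is the linear map of $\mathbb{R}^4$ that fixes the other two standard basis vectors and acts on the $k,j$ coordinate plane by $\mathbf{e}_k\mapsto\cos\alpha\,\mathbf{e}_k+\sin\alpha\,\mathbf{e}_j$, $\mathbf{e}_j\mapsto-\sin\alpha\,\mathbf{e}_k+\cos\alpha\,\mathbf{e}_j$. Thus $R^{xy}_\theta$, $R^{zw}_\phi$, $R^{xw}_\psi$ are the elementary rotations of the $x,y$-, $z,w$- and $x,w$-planes respectively. *)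

theory Defs
  imports "HOL-Analysis.Analysis"
begin

text \<open>Rotations of R^n as matrices (columns = images of standard basis vectors).\<close>
definition rotation :: "real^'n^'n \<Rightarrow> bool" where
  "rotation A \<longleftrightarrow> orthogonal_matrix A \<and> det A = 1"

definition elem_rot :: "4 \<Rightarrow> 4 \<Rightarrow> real \<Rightarrow> real^4^4" where
  "elem_rot k j a = (\<chi> r c.
     if r = k \<and> c = k then cos a
     else if r = j \<and> c = k then sin a
     else if r = k \<and> c = j then - sin a
     else if r = j \<and> c = j then cos a
     else if r = c then 1 else 0)"

end

theory Submission
  imports Defs
begin

lemma polar: fixes a b :: real shows "\<exists>t. a = sqrt (a\<^sup>2+b\<^sup>2) * cos t \<and> b = sqrt (a\<^sup>2+b\<^sup>2) * sin t"
proof -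
  let ?z = "Complex a b"
  have "rcis (cmod ?z) (Arg ?z) = ?z" by (rule rcis_cmod_Arg)
  hence "Re (rcis (cmod ?z) (Arg ?z)) = a" "Im (rcis (cmod ?z) (Arg ?z)) = b" by simp_all
  hence "a = sqrt (a\<^sup>2+b\<^sup>2) * cos (Arg ?z) \<and> b = sqrt (a\<^sup>2+b\<^sup>2) * sin (Arg ?z)" by (auto simp: cmod_def)
  thus ?thesis by blast
qed

lemma er_add:
  assumes "(k,j) \<in> {(1,4),(3,4),(1,2)}"
  shows "elem_rot k j a ** elem_rot k j b = elem_rot k j (a+b)"
  using assms
  by (auto simp: vec_eq_iff forall_4 matrix_matrix_mult_def elem_rot_def sum_4 cos_add sin_add)

lemma er_0:
  assumes "(k,j) \<in> {(1,4),(3,4),(1,2)}"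
  shows "elem_rot k j 0 = mat 1"
  using assms
  by (auto simp: vec_eq_iff forall_4 elem_rot_def mat_def)

lemma er_tr:
  assumes "(k,j) \<in> {(1,4),(3,4),(1,2)}"
  shows "transpose (elem_rot k j a) = elem_rot k j (-a)"
  using assms
  by (auto simp: vec_eq_iff forall_4 elem_rot_def transpose_def)

lemma er_rot:
  assumes "(k,j) \<in> {(1,4),(3,4),(1,2)}"
  shows "rotation (elem_rot k j a)"
proof -
  have o: "orthogonal_matrix (elem_rot k j b)" for b
  proof -
    have 1: "elem_rot k j (-b) ** elem_rot k j b = mat 1"
      using er_add[OF assms, of "-b" b] er_0[OF assms] by simp
    have 2: "elem_rot k j b ** elem_rot k j (-b) = mat 1"
      using er_add[OF assms, of b "-b"] er_0[OF assms] by simp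
    show ?thesis unfolding orthogonal_matrix_def er_tr[OF assms] using 1 2 by blast
  qed
  have d: "det (elem_rot k j a) = det (elem_rot k j (a/2)) ^ 2"
    using er_add[OF assms, of "a/2" "a/2"] det_mul[of "elem_rot k j (a/2)" "elem_rot k j (a/2)"]
    by (simp add: power2_eq_square)
  have "det (elem_rot k j a) = 1 \<or> det (elem_rot k j a) = -1" by (rule det_orthogonal_matrix[OF o])
  moreover have "det (elem_rot k j a) \<ge> 0" unfolding d by simp
  ultimately have "det (elem_rot k j a) = 1" by linarith
  thus ?thesis using o by (simp add: rotation_def)
qed

lemma rowA_ent:
  "(elem_rot 1 4 p ** elem_rot 3 4 f ** elem_rot 1 2 t) $ 4 $ 1 = sin p * cos t"
  "(elem_rot 1 4 p ** elem_rot 3 4 f ** elem_rot 1 2 t) $ 4 $ 2 = - (sin p * sin t)"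
  "(elem_rot 1 4 p ** elem_rot 3 4 f ** elem_rot 1 2 t) $ 4 $ 3 = cos p * sin f"
  "(elem_rot 1 4 p ** elem_rot 3 4 f ** elem_rot 1 2 t) $ 4 $ 4 = cos p * cos f"
  by (simp_all add: matrix_matrix_mult_def elem_rot_def sum_4)

lemma trax: "(transpose M *v axis i 1) $ k = (M :: real^4^4) $ i $ k"
  by (simp add: matrix_vector_mult_def transpose_def axis_def sum_4 forall_4) (metis exhaust_4)

theorem theorem3:
  fixes R :: "real^4^4"
  assumes "rotation R"
  shows "\<exists>R0 \<theta> \<phi> \<psi>.
           rotation R0 \<and>
           R0 *v axis 4 1 = axis 4 1 \<and>
           (\<forall>v::real^4. v $ 4 = 0 \<longrightarrow> (R0 *v v) $ 4 = 0) \<and>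
           R = R0 ** elem_rot 1 4 \<psi> ** elem_rot 3 4 \<phi> ** elem_rot 1 2 \<theta>"
proof -
  have oR: "orthogonal_matrix R" and dR: "det R = 1" using assms by (auto simp: rotation_def)
  have "(R ** transpose R) $ 4 $ 4 = 1" using oR by (simp add: orthogonal_matrix_def mat_def)
  hence unit: "(R$4$1)\<^sup>2 + (R$4$2)\<^sup>2 + (R$4$3)\<^sup>2 + (R$4$4)\<^sup>2 = 1"
    by (simp add: matrix_matrix_mult_def transpose_def sum_4 power2_eq_square)
  define \<rho> where "\<rho> = sqrt ((R$4$4)\<^sup>2 + (R$4$3)\<^sup>2)"
  define \<sigma> where "\<sigma> = sqrt ((R$4$1)\<^sup>2 + (- R$4$2)\<^sup>2)"
  obtain \<phi> where ph: "R$4$4 = \<rho> * cos \<phi>" "R$4$3 = \<rho> * sin \<phi>"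
    using polar[of "R$4$4" "R$4$3"] unfolding \<rho>_def by blast
  obtain \<theta> where th: "R$4$1 = \<sigma> * cos \<theta>" "- R$4$2 = \<sigma> * sin \<theta>"
    using polar[of "R$4$1" "- R$4$2"] unfolding \<sigma>_def by blast
  have "\<rho>\<^sup>2 + \<sigma>\<^sup>2 = 1" unfolding \<rho>_def \<sigma>_def using unit by simp
  then obtain \<psi> where ps: "\<rho> = cos \<psi>" "\<sigma> = sin \<psi>"
    using polar[of \<rho> \<sigma>] by auto
  define A where "A = elem_rot 1 4 \<psi> ** elem_rot 3 4 \<phi> ** elem_rot 1 2 \<theta>"
  have rowA: "A $ 4 $ i = R $ 4 $ i" for i
  proof -
    have "A $ 4 $ 1 = R $ 4 $ 1" unfolding A_def rowA_ent using ph th ps by simp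
    moreover have "A $ 4 $ 2 = R $ 4 $ 2" unfolding A_def rowA_ent using ph th ps by simp
    moreover have "A $ 4 $ 3 = R $ 4 $ 3" unfolding A_def rowA_ent using ph th ps by simp
    moreover have "A $ 4 $ 4 = R $ 4 $ 4" unfolding A_def rowA_ent using ph th ps by simp
    ultimately show ?thesis using exhaust_4[of i] by blast
  qed
  have rA: "rotation A" unfolding A_def using er_rot[of 1 4] er_rot[of 3 4] er_rot[of 1 2]
    by (simp add: rotation_def orthogonal_matrix_mul det_mul)
  hence oA: "orthogonal_matrix A" and dA: "det A = 1" by (auto simp: rotation_def)
  define R0 where "R0 = R ** transpose A"
  have rR0: "rotation R0" unfolding R0_def rotation_def
    using oR oA dR dA by (simp add: orthogonal_matrix_mul orthogonal_matrix_transpose det_mul det_transpose)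
  have eq: "R = R0 ** A" unfolding R0_def using oA
    by (metis matrix_mul_assoc matrix_mul_rid orthogonal_matrix_def)
  have tAe: "transpose A *v axis 4 1 = transpose R *v axis 4 1"
    unfolding vec_eq_iff trax rowA by simp
  have fix4: "R0 *v axis 4 1 = axis 4 1"
  proof -
    have "R0 *v axis 4 1 = R *v (transpose A *v axis 4 1)"
      unfolding R0_def by (simp only: matrix_vector_mul_assoc)
    also have "\<dots> = (R ** transpose R) *v axis 4 1"
      by (simp only: tAe matrix_vector_mul_assoc)
    also have "\<dots> = axis 4 1" using oR by (simp add: orthogonal_matrix_def)
    finally show ?thesis .
  qed
  have "transpose R0 *v axis 4 1 = axis 4 1"
  proof -
    have o0: "transpose R0 ** R0 = mat 1" using rR0 by (simp add: rotation_def orthogonal_matrix_def)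
    have "transpose R0 *v axis 4 1 = transpose R0 *v (R0 *v axis 4 1)" by (simp only: fix4)
    also have "\<dots> = (transpose R0 ** R0) *v axis 4 1" by (simp only: matrix_vector_mul_assoc)
    also have "\<dots> = axis 4 1" by (simp only: o0 matrix_vector_mul_lid)
    finally show ?thesis .
  qed
  hence row4: "R0 $ 4 $ i = (if i = 4 then 1 else 0)" for i
    using trax[of R0 4 i] by (simp add: axis_def)
  have p4: "\<forall>v::real^4. v $ 4 = 0 \<longrightarrow> (R0 *v v) $ 4 = 0"
    by (simp add: matrix_vector_mult_def row4 sum_4)
  have eq2: "R = R0 ** elem_rot 1 4 \<psi> ** elem_rot 3 4 \<phi> ** elem_rot 1 2 \<theta>"
    unfolding eq A_def by (simp only: matrix_mul_assoc)
  show ?thesis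
    apply (rule exI[of _ R0], rule exI[of _ \<theta>], rule exI[of _ \<phi>], rule exI[of _ \<psi>])
    using rR0 fix4 p4 eq2 by (intro conjI)
qed

end
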